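(* Let $(G,u)$ be a unital po-group such that $G$ satisfies RIP. If the pseudo effect algebra $E=\Gamma(G,u)$ satisfies RDP$_1$, then $G$ satisfies RDP$_1$.
   Context: A po-group is a (not necessarily Abelian, additively written) group with a partial order $\le$ such that $a\le b$ implies $x+a+y\le x+b+y$; $G^+$ is its positive cone. A unital po-group $(G,u)$ is a po-group with a strong unit $u\in G^+$ (for each $g\in G$ there is $k\ge1$ with $g\le ku$). $\Gamma(G,u)=\{g\in G:0\le g\le u\}$ is a pseudo effect algebra with constants $0,u$ and partial addition: $a+b$ is defined (equal to the group sum) iff $a+b\le u$. RIP: whenever $a_i\le b_j$ for all $i,j\in\{1,2\}$, there is $c$ with $a_i\le c\le b_j$ for all $i,j$. RDP$_1$ for a po-group $G$: for all $a_1,a_2,b_1,b_2\in G^+$ with $a_1+a_2=b_1+b_2$ there are $c_{11},c_{12},c_{21},c_{22}\in G^+$ with $a_1=c_{11}+c_{12}$, $a_2=c_{21}+c_{22}$, $b_1=c_{11}+c_{21}$, $b_2=c_{12}+c_{22}$, and such that $0\le x\le c_{12}$, $0\le y\le c_{21}$ imply $x+y=y+x$. RDP$_1$ for a pseudo effect algebra $E$ is defined identically with $G^+$ replaced by $E$ and all sums required to be defined in $E$. *)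

theory Defs
  imports Main
begin

definition po_group :: "('a::{group_add,order}) itself \<Rightarrow> bool" where
  "po_group _ \<longleftrightarrow> (\<forall>a b x y :: 'a. a \<le> b \<longrightarrow> x + a + y \<le> x + b + y)"

definition kmul :: "nat \<Rightarrow> 'a::monoid_add \<Rightarrow> 'a" where
  "kmul k u = ((\<lambda>x. u + x) ^^ k) 0"

definition strong_unit :: "'a::{group_add,order} \<Rightarrow> bool" where
  "strong_unit u \<longleftrightarrow> 0 \<le> u \<and> (\<forall>g. \<exists>k\<ge>1. g \<le> kmul k u)"

definition RIP :: "('a::order) itself \<Rightarrow> bool" where
  "RIP _ \<longleftrightarrow> (\<forall>a1 a2 b1 b2 :: 'a.
     a1 \<le> b1 \<and> a1 \<le> b2 \<and> a2 \<le> b1 \<and> a2 \<le> b2 \<longrightarrow>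
     (\<exists>c. a1 \<le> c \<and> a2 \<le> c \<and> c \<le> b1 \<and> c \<le> b2))"

definition RDP1_group :: "('a::{group_add,order}) itself \<Rightarrow> bool" where
  "RDP1_group _ \<longleftrightarrow> (\<forall>a1 a2 b1 b2 :: 'a.
     0 \<le> a1 \<and> 0 \<le> a2 \<and> 0 \<le> b1 \<and> 0 \<le> b2 \<and> a1 + a2 = b1 + b2 \<longrightarrow>
     (\<exists>c11 c12 c21 c22.
        0 \<le> c11 \<and> 0 \<le> c12 \<and> 0 \<le> c21 \<and> 0 \<le> c22 \<and>
        a1 = c11 + c12 \<and> a2 = c21 + c22 \<and> b1 = c11 + c21 \<and> b2 = c12 + c22 \<and>
        (\<forall>x y. 0 \<le> x \<and> x \<le> c12 \<and> 0 \<le> y \<and> y \<le> c21 \<longrightarrow> x + y = y + x)))"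

text \<open>The interval Gamma(G,u) = [0,u]; the partial sum a+b is defined iff a+b \<le> u.\<close>
definition Gamma :: "'a::{group_add,order} \<Rightarrow> 'a set" where
  "Gamma u = {g. 0 \<le> g \<and> g \<le> u}"

text \<open>RDP_1 for the pseudo effect algebra Gamma(G,u): all elements in Gamma(G,u)
and all sums mentioned required to be defined (i.e. \<le> u).\<close>
definition RDP1_Gamma :: "'a::{group_add,order} \<Rightarrow> bool" where
  "RDP1_Gamma u \<longleftrightarrow> (\<forall>a1 a2 b1 b2.
     a1 \<in> Gamma u \<and> a2 \<in> Gamma u \<and> b1 \<in> Gamma u \<and> b2 \<in> Gamma u \<and>
     a1 + a2 \<le> u \<and> b1 + b2 \<le> u \<and> a1 + a2 = b1 + b2 \<longrightarrow>
     (\<exists>c11 c12 c21 c22.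
        c11 \<in> Gamma u \<and> c12 \<in> Gamma u \<and> c21 \<in> Gamma u \<and> c22 \<in> Gamma u \<and>
        c11 + c12 \<le> u \<and> c21 + c22 \<le> u \<and> c11 + c21 \<le> u \<and> c12 + c22 \<le> u \<and>
        a1 = c11 + c12 \<and> a2 = c21 + c22 \<and> b1 = c11 + c21 \<and> b2 = c12 + c22 \<and>
        (\<forall>x y. x \<in> Gamma u \<and> y \<in> Gamma u \<and> x \<le> c12 \<and> y \<le> c21 \<longrightarrow>
           x + y \<le> u \<and> y + x \<le> u \<and> x + y = y + x)))"

end

theory Submission
  imports Defs
begin

definition com :: "'a::{group_add,order} \<Rightarrow> 'a \<Rightarrow> bool" where
  "com c d \<longleftrightarrow> (\<forall>x y. 0 \<le> x \<and> x \<le> c \<and> 0 \<le> y \<and> y \<le> d \<longrightarrow> x + y = y + x)"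

definition dec :: "'a::{group_add,order} \<Rightarrow> 'a \<Rightarrow> 'a \<Rightarrow> 'a \<Rightarrow> bool" where
  "dec a1 a2 b1 b2 \<longleftrightarrow> (\<exists>c11 c12 c21 c22. 0 \<le> c11 \<and> 0 \<le> c12 \<and> 0 \<le> c21 \<and> 0 \<le> c22 \<and>
     a1 = c11 + c12 \<and> a2 = c21 + c22 \<and> b1 = c11 + c21 \<and> b2 = c12 + c22 \<and> com c12 c21)"

context
  fixes T :: "'a::{group_add,order} itself"
  assumes P: "po_group T"
begin

lemma pgL: "(a::'a) \<le> b \<Longrightarrow> x + a \<le> x + b"
  using P unfolding po_group_def by (metis add_0_right)

lemma pgR: "(a::'a) \<le> b \<Longrightarrow> a + y \<le> b + y"
  using P unfolding po_group_def by (metis add_0_left)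

lemma pgL_iff: "x + (a::'a) \<le> x + b \<longleftrightarrow> a \<le> b"
  using pgL[of "x+a" "x+b" "-x"] pgL[of a b x] by (auto simp: add.assoc[symmetric])

lemma pgR_iff: "(a::'a) + y \<le> b + y \<longleftrightarrow> a \<le> b"
  using pgR[of "a+y" "b+y" "-y"] pgR[of a b y] by (auto simp: add.assoc)

lemma le_addR: "0 \<le> (b::'a) \<Longrightarrow> a \<le> a + b"
  using pgL[of 0 b a] by simp

lemma le_addL: "0 \<le> (a::'a) \<Longrightarrow> b \<le> a + b"
  using pgR[of 0 a b] by simp

lemma nonneg_add: "0 \<le> (a::'a) \<Longrightarrow> 0 \<le> b \<Longrightarrow> 0 \<le> a + b"
  using le_addR[of b a] by (metis order_trans)

lemma le_iff1: "(y::'a) \<le> c + X \<longleftrightarrow> -c + y \<le> X"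
  using pgL_iff[of c "-c+y" X] by (simp add: add.assoc[symmetric])

lemma le_iff2: "(y::'a) \<le> c + X \<longleftrightarrow> y + -X \<le> c"
  using pgR_iff[of "y + -X" X c] by (simp add: add.assoc)

lemma nonneg_diff1: "(c::'a) \<le> x \<Longrightarrow> 0 \<le> -c + x"
  using pgL[of c x "-c"] by simp

lemma neg_nonpos: "0 \<le> (b::'a) \<Longrightarrow> -b \<le> 0"
  using pgL[of 0 b "-b"] by simp

lemma kmul_Suc: "kmul (Suc k) u = u + kmul k u"
  by (simp add: kmul_def)

lemma kmul_0: "kmul 0 u = 0"
  by (simp add: kmul_def)

lemma kmul_nonneg: "0 \<le> (u::'a) \<Longrightarrow> 0 \<le> kmul k u"
  by (induction k) (auto simp: kmul_Suc kmul_0 intro: nonneg_add)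

lemma com_sym: "com c d \<Longrightarrow> com d c"
  unfolding com_def by metis

lemma com_mono: "com c d \<Longrightarrow> c' \<le> c \<Longrightarrow> d' \<le> d \<Longrightarrow> com c' d'"
  unfolding com_def by (meson order_trans)

context
  assumes R: "RIP T"
begin

lemma RIP': "a1 \<le> b1 \<Longrightarrow> a1 \<le> b2 \<Longrightarrow> a2 \<le> b1 \<Longrightarrow> (a2::'a) \<le> b2 \<Longrightarrow>
     \<exists>c. a1 \<le> c \<and> a2 \<le> c \<and> c \<le> b1 \<and> c \<le> b2"
  using R unfolding RIP_def by blast

lemma RDP0:
  assumes "0 \<le> (a::'a)" "0 \<le> b" "0 \<le> x" "x \<le> a + b"
  shows "\<exists>x1 x2. x = x1 + x2 \<and> 0 \<le> x1 \<and> x1 \<le> a \<and> 0 \<le> x2 \<and> x2 \<le> b"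
proof -
  have "x + -b \<le> a" using assms(4) le_iff2 by blast
  moreover have "x + -b \<le> x" using pgL[OF neg_nonpos[OF assms(2)], of x] by simp
  ultimately obtain c where c: "0 \<le> c" "x + -b \<le> c" "c \<le> a" "c \<le> x"
    using RIP'[of 0 a x "x + -b"] assms by blast
  have "x \<le> c + b" using c(2) le_iff2 by blast
  hence "-c + x \<le> b" using le_iff1 by blast
  moreover have "x = c + (-c + x)" by (simp add: add.assoc[symmetric])
  ultimately show ?thesis using c nonneg_diff1[OF c(4)] by blast
qed

lemma com_add2:
  assumes "com (c::'a) d1" "com c d2" "0 \<le> d1" "0 \<le> d2"
  shows "com c (d1 + d2)"
  unfolding com_def
proof (intro allI impI)
  fix x y :: 'a
  assume h: "0 \<le> x \<and> x \<le> c \<and> 0 \<le> y \<and> y \<le> d1 + d2"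
  then obtain y1 y2 where y: "y = y1 + y2" "0 \<le> y1" "y1 \<le> d1" "0 \<le> y2" "y2 \<le> d2"
    using RDP0[OF assms(3,4)] by blast
  have e1: "x + y1 = y1 + x" using assms(1) h y unfolding com_def by blast
  have e2: "x + y2 = y2 + x" using assms(2) h y unfolding com_def by blast
  have "x + y = (x + y1) + y2" by (simp add: y add.assoc)
  also have "\<dots> = y1 + (x + y2)" by (simp add: e1 add.assoc)
  also have "\<dots> = y + x" by (simp add: e2 y add.assoc)
  finally show "x + y = y + x" .
qed

lemma com_add1:
  assumes "com (c1::'a) d" "com c2 d" "0 \<le> c1" "0 \<le> c2"
  shows "com (c1 + c2) d"
  using com_add2[OF com_sym[OF assms(1)] com_sym[OF assms(2)] assms(3,4)] com_sym by blast

lemma decomp: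
  assumes "0 \<le> (u::'a)" "0 \<le> a" "a \<le> kmul (Suc k) u"
  shows "\<exists>x a'. a = x + a' \<and> 0 \<le> x \<and> x \<le> u \<and> 0 \<le> a' \<and> a' \<le> kmul k u"
proof -
  have K: "0 \<le> kmul k u" using kmul_nonneg[OF assms(1)] .
  have "a + - kmul k u \<le> u" using assms(3) le_iff2 kmul_Suc by metis
  moreover have "a + - kmul k u \<le> a" using pgL[OF neg_nonpos[OF K], of a] by simp
  ultimately obtain c where c: "0 \<le> c" "a + - kmul k u \<le> c" "c \<le> u" "c \<le> a"
    using RIP'[of 0 u a "a + - kmul k u"] assms by blast
  have "a \<le> c + kmul k u" using c(2) le_iff2 by blast
  hence "-c + a \<le> kmul k u" using le_iff1 by blast
  moreover have "a = c + (-c + a)" by (simp add: add.assoc[symmetric])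
  ultimately show ?thesis using c nonneg_diff1[OF c(4)] by blast
qed


context
  fixes u :: 'a
  assumes G: "RDP1_Gamma u"
begin

lemma L1:
  assumes x: "0 \<le> x" "x \<le> u" and y: "0 \<le> y" "y \<le> u"
    and XY: "0 \<le> X" "0 \<le> Y" and eq: "x + X = y + (Y::'a)"
  shows "\<exists>c11 c12 c21 D. 0 \<le> c11 \<and> 0 \<le> c12 \<and> 0 \<le> c21 \<and> 0 \<le> D \<and>
     x = c11 + c12 \<and> y = c11 + c21 \<and> X = c21 + D \<and> Y = c12 + D \<and> com c12 c21"
proof -
  have "x \<le> x + X" using le_addR[OF XY(1)] .
  moreover have "y \<le> x + X" using le_addR[OF XY(2), of y] eq by simp
  ultimately obtain s where s: "x \<le> s" "y \<le> s" "s \<le> u" "s \<le> x + X"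
    using RIP'[of x u "x + X" y] x y by blast
  define X' where "X' = -x + s"
  define Y' where "Y' = -y + s"
  have X'0: "0 \<le> X'" unfolding X'_def using nonneg_diff1[OF s(1)] .
  have Y'0: "0 \<le> Y'" unfolding Y'_def using nonneg_diff1[OF s(2)] .
  have "X' \<le> s" unfolding X'_def using pgR[OF neg_nonpos[OF x(1)], of s] by simp
  hence X'u: "X' \<le> u" using s(3) by (rule order_trans)
  have "Y' \<le> s" unfolding Y'_def using pgR[OF neg_nonpos[OF y(1)], of s] by simp
  hence Y'u: "Y' \<le> u" using s(3) by (rule order_trans)
  have xs: "x + X' = s" unfolding X'_def by (simp add: add.assoc[symmetric])
  have ys: "y + Y' = s" unfolding Y'_def by (simp add: add.assoc[symmetric])
  have "x \<in> Gamma u \<and> X' \<in> Gamma u \<and> y \<in> Gamma u \<and> Y' \<in> Gamma u \<and>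
     x + X' \<le> u \<and> y + Y' \<le> u \<and> x + X' = y + Y'"
  proof -
    have a: "x + X' \<le> u" "y + Y' \<le> u" "x + X' = y + Y'" using xs ys s(3) by auto
    show ?thesis unfolding Gamma_def mem_Collect_eq using x y X'0 Y'0 X'u Y'u a by blast
  qed
  note H = mp[OF spec[OF spec[OF spec[OF spec[OF G[unfolded RDP1_Gamma_def], of x], of X'], of y], of Y'] this]
  obtain c11 c12 c21 c22 where c:
     "c11 \<in> Gamma u" "c12 \<in> Gamma u" "c21 \<in> Gamma u" "c22 \<in> Gamma u"
     "x = c11 + c12" "X' = c21 + c22" "y = c11 + c21" "Y' = c12 + c22"
     "\<forall>x y. x \<in> Gamma u \<and> y \<in> Gamma u \<and> x \<le> c12 \<and> y \<le> c21 \<longrightarrow> x + y = y + x"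
    using H by blast
  have cm: "com c12 c21" unfolding com_def
  proof (intro allI impI)
    fix a b assume h: "0 \<le> a \<and> a \<le> c12 \<and> 0 \<le> b \<and> b \<le> c21"
    hence "a \<in> Gamma u" "b \<in> Gamma u" using c(2,3) unfolding Gamma_def by (auto dest: order_trans)
    thus "a + b = b + a" using c(9) h by blast
  qed
  define D where "D = c22 + (-s + x + X)"
  have R0: "0 \<le> -s + x + X" using nonneg_diff1[OF s(4)] by (simp add: add.assoc)
  have D0: "0 \<le> D" unfolding D_def using c(4) R0 nonneg_add unfolding Gamma_def by simp
  have "(c21 + c22) + (-s + x + X) = (-x + s) + (-s + x + X)" using c(6) unfolding X'_def by simp
  also have "\<dots> = X" by (simp add: add.assoc)
  finally have "X = (c21 + c22) + (-s + x + X)" by simp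
  hence XD: "X = c21 + D" unfolding D_def by (simp add: add.assoc)
  have "Y = -y + (y + Y)" by (simp add: add.assoc[symmetric])
  also have "\<dots> = -y + (x + X)" using eq by simp
  also have "\<dots> = (-y + s) + (-s + x + X)" by (simp add: add.assoc)
  also have "\<dots> = (c12 + c22) + (-s + x + X)" using c(8) unfolding Y'_def by simp
  finally have YD: "Y = c12 + D" unfolding D_def by (simp add: add.assoc)
  have "0 \<le> c11" "0 \<le> c12" "0 \<le> c21" using c(1-3) unfolding Gamma_def by auto
  thus ?thesis using c(5,7) cm XD YD D0 by blast
qed


lemma claimB:
  assumes u0: "0 \<le> u"
  shows "\<forall>a1 a2 b1 b2. 0 \<le> a1 \<and> a1 \<le> u \<and> 0 \<le> a2 \<and> 0 \<le> b1 \<and> b1 \<le> kmul m u \<and> 0 \<le> b2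
     \<and> a1 + a2 = b1 + b2 \<longrightarrow> dec a1 a2 b1 b2"
proof (induction m)
  case 0
  show ?case
  proof (intro allI impI)
    fix a1 a2 b1 b2 :: 'a
    assume h: "0 \<le> a1 \<and> a1 \<le> u \<and> 0 \<le> a2 \<and> 0 \<le> b1 \<and> b1 \<le> kmul 0 u \<and> 0 \<le> b2 \<and> a1 + a2 = b1 + b2"
    hence b10: "b1 = 0" unfolding kmul_0 by (intro antisym) auto
    hence b2: "b2 = a1 + a2" using h by simp
    have cm: "com a1 0" unfolding com_def by (auto dest: antisym)
    show "dec a1 a2 b1 b2" unfolding dec_def
      apply (rule exI[of _ 0], rule exI[of _ a1], rule exI[of _ 0], rule exI[of _ a2])
      using h b10 b2 cm by simp
  qed
next
  case (Suc m)
  show ?case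
  proof (intro allI impI)
    fix a1 a2 b1 b2 :: 'a
    assume h: "0 \<le> a1 \<and> a1 \<le> u \<and> 0 \<le> a2 \<and> 0 \<le> b1 \<and> b1 \<le> kmul (Suc m) u \<and> 0 \<le> b2 \<and> a1 + a2 = b1 + b2"
    obtain y b1' where yb: "b1 = y + b1'" "0 \<le> y" "y \<le> u" "0 \<le> b1'" "b1' \<le> kmul m u"
      using decomp[OF u0, of b1 m] h by blast
    have eq: "a1 + a2 = y + (b1' + b2)" using h yb by (simp add: add.assoc)
    have bb: "0 \<le> b1' + b2" using nonneg_add yb h by blast
    obtain d11 d12 d21 D where d: "0 \<le> d11" "0 \<le> d12" "0 \<le> d21" "0 \<le> D"
      "a1 = d11 + d12" "y = d11 + d21" "a2 = d21 + D" "b1' + b2 = d12 + D" "com d12 d21"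
      using L1[of a1 y a2 "b1'+b2"] h yb eq bb by blast
    have "d12 \<le> a1" using le_addL[OF d(1), of d12] d(5) by simp
    hence "d12 \<le> u" using h order_trans by blast
    hence "0 \<le> d12 \<and> d12 \<le> u \<and> 0 \<le> D \<and> 0 \<le> b1' \<and> b1' \<le> kmul m u \<and> 0 \<le> b2 \<and> d12 + D = b1' + b2"
      using h d(2,4,8) yb(4,5) by simp
    note IH = mp[OF spec[OF spec[OF spec[OF spec[OF Suc.IH, of d12], of D], of b1'], of b2] this]
    obtain e11 e12 e21 e22 where e: "0 \<le> e11" "0 \<le> e12" "0 \<le> e21" "0 \<le> e22"
      "d12 = e11 + e12" "D = e21 + e22" "b1' = e11 + e21" "b2 = e12 + e22" "com e12 e21"
      using IH unfolding dec_def by blast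
    have e11d: "e11 \<le> d12" using le_addR[OF e(2), of e11] e(5) by simp
    have e12d: "e12 \<le> d12" using le_addL[OF e(1), of e12] e(5) by simp
    have sw: "e11 + d21 = d21 + e11" using d(9) e11d e(1) d(3) unfolding com_def by blast
    have A1: "a1 = (d11 + e11) + e12" using d(5) e(5) by (simp add: add.assoc)
    have A2: "a2 = (d21 + e21) + e22" using d(7) e(6) by (simp add: add.assoc)
    have "b1 = d11 + ((d21 + e11) + e21)" using yb(1) d(6) e(7) by (simp add: add.assoc)
    also have "\<dots> = d11 + ((e11 + d21) + e21)" by (simp only: sw)
    also have "\<dots> = (d11 + e11) + (d21 + e21)" by (simp add: add.assoc)
    finally have B1: "b1 = (d11 + e11) + (d21 + e21)" .
    have cm: "com e12 (d21 + e21)"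
      using com_add2[OF com_mono[OF d(9) e12d order_refl] e(9) d(3) e(3)] .
    show "dec a1 a2 b1 b2" unfolding dec_def
      apply (rule exI[of _ "d11 + e11"], rule exI[of _ e12], rule exI[of _ "d21 + e21"], rule exI[of _ e22])
      using A1 A2 B1 e(8) cm e(2,4) nonneg_add[OF d(1) e(1)] nonneg_add[OF d(3) e(3)] by simp
  qed
qed

lemma claimC:
  assumes su: "strong_unit u"
  shows "\<forall>a1 a2 b1 b2. 0 \<le> a1 \<and> a1 \<le> kmul n u \<and> 0 \<le> a2 \<and> 0 \<le> b1 \<and> 0 \<le> b2
     \<and> a1 + a2 = b1 + b2 \<longrightarrow> dec a1 a2 b1 b2"
proof (induction n)
  case 0
  show ?case
  proof (intro allI impI)
    fix a1 a2 b1 b2 :: 'a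
    assume h: "0 \<le> a1 \<and> a1 \<le> kmul 0 u \<and> 0 \<le> a2 \<and> 0 \<le> b1 \<and> 0 \<le> b2 \<and> a1 + a2 = b1 + b2"
    hence a10: "a1 = 0" unfolding kmul_0 by (intro antisym) auto
    hence a2: "a2 = b1 + b2" using h by simp
    have cm: "com 0 b1" unfolding com_def by (auto dest: antisym)
    show "dec a1 a2 b1 b2" unfolding dec_def
      apply (rule exI[of _ 0], rule exI[of _ 0], rule exI[of _ b1], rule exI[of _ b2])
      using h a10 a2 cm by simp
  qed
next
  case (Suc n)
  have u0: "0 \<le> u" using su unfolding strong_unit_def by blast
  show ?case
  proof (intro allI impI)
    fix a1 a2 b1 b2 :: 'a
    assume h: "0 \<le> a1 \<and> a1 \<le> kmul (Suc n) u \<and> 0 \<le> a2 \<and> 0 \<le> b1 \<and> 0 \<le> b2 \<and> a1 + a2 = b1 + b2"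
    obtain x a1' where xa: "a1 = x + a1'" "0 \<le> x" "x \<le> u" "0 \<le> a1'" "a1' \<le> kmul n u"
      using decomp[OF u0, of a1 n] h by blast
    obtain m where m: "b1 \<le> kmul m u" using su unfolding strong_unit_def by blast
    have aa: "0 \<le> a1' + a2" using nonneg_add xa h by blast
    have "0 \<le> x \<and> x \<le> u \<and> 0 \<le> a1' + a2 \<and> 0 \<le> b1 \<and> b1 \<le> kmul m u \<and> 0 \<le> b2 \<and> x + (a1' + a2) = b1 + b2"
      using h xa m aa by (simp add: add.assoc[symmetric])
    note B = mp[OF spec[OF spec[OF spec[OF spec[OF claimB[OF u0, of m], of x], of "a1' + a2"], of b1], of b2] this]
    obtain d11 d12 d21 d22 where d: "0 \<le> d11" "0 \<le> d12" "0 \<le> d21" "0 \<le> d22"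
      "x = d11 + d12" "a1' + a2 = d21 + d22" "b1 = d11 + d21" "b2 = d12 + d22" "com d12 d21"
      using B unfolding dec_def by blast
    have "0 \<le> a1' \<and> a1' \<le> kmul n u \<and> 0 \<le> a2 \<and> 0 \<le> d21 \<and> 0 \<le> d22 \<and> a1' + a2 = d21 + d22"
      using xa h d by blast
    note IH = mp[OF spec[OF spec[OF spec[OF spec[OF Suc.IH, of a1'], of a2], of d21], of d22] this]
    obtain e11 e12 e21 e22 where e: "0 \<le> e11" "0 \<le> e12" "0 \<le> e21" "0 \<le> e22"
      "a1' = e11 + e12" "a2 = e21 + e22" "d21 = e11 + e21" "d22 = e12 + e22" "com e12 e21"
      using IH unfolding dec_def by blast
    have e11d: "e11 \<le> d21" using le_addR[OF e(3), of e11] e(7) by simp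
    have e21d: "e21 \<le> d21" using le_addL[OF e(1), of e21] e(7) by simp
    have sw: "d12 + e11 = e11 + d12" using d(9) e11d e(1) d(2) unfolding com_def by blast
    have "a1 = d11 + ((d12 + e11) + e12)" using xa(1) d(5) e(5) by (simp add: add.assoc)
    also have "\<dots> = d11 + ((e11 + d12) + e12)" by (simp only: sw)
    also have "\<dots> = (d11 + e11) + (d12 + e12)" by (simp add: add.assoc)
    finally have A1: "a1 = (d11 + e11) + (d12 + e12)" .
    have B1: "b1 = (d11 + e11) + e21" using d(7) e(7) by (simp add: add.assoc)
    have B2: "b2 = (d12 + e12) + e22" using d(8) e(8) by (simp add: add.assoc)
    have cm: "com (d12 + e12) e21"
      using com_add1[OF com_mono[OF d(9) order_refl e21d] e(9) d(2) e(2)] .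
    show "dec a1 a2 b1 b2" unfolding dec_def
      apply (rule exI[of _ "d11 + e11"], rule exI[of _ "d12 + e12"], rule exI[of _ e21], rule exI[of _ e22])
      using A1 B1 B2 e(6) cm e(3,4) nonneg_add[OF d(1) e(1)] nonneg_add[OF d(2) e(2)] by simp
  qed
qed

end

end
end

theorem theorem3p6:
  fixes u :: "'a::{group_add,order}"
  assumes "po_group TYPE('a)"
    and "strong_unit u"
    and "RIP TYPE('a)"
    and "RDP1_Gamma u"
  shows "RDP1_group TYPE('a)"
  unfolding RDP1_group_def
proof (intro allI impI)
  fix a1 a2 b1 b2 :: 'a
  assume h: "0 \<le> a1 \<and> 0 \<le> a2 \<and> 0 \<le> b1 \<and> 0 \<le> b2 \<and> a1 + a2 = b1 + b2"
  obtain n where n: "a1 \<le> kmul n u" using assms(2) unfolding strong_unit_def by blast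
  have "0 \<le> a1 \<and> a1 \<le> kmul n u \<and> 0 \<le> a2 \<and> 0 \<le> b1 \<and> 0 \<le> b2 \<and> a1 + a2 = b1 + b2"
    using h n by blast
  hence "dec a1 a2 b1 b2"
    using claimC[OF assms(1) assms(3) assms(4) assms(2), of n] by blast
  thus "\<exists>c11 c12 c21 c22.
        0 \<le> c11 \<and> 0 \<le> c12 \<and> 0 \<le> c21 \<and> 0 \<le> c22 \<and>
        a1 = c11 + c12 \<and> a2 = c21 + c22 \<and> b1 = c11 + c21 \<and> b2 = c12 + c22 \<and>
        (\<forall>x y. 0 \<le> x \<and> x \<le> c12 \<and> 0 \<le> y \<and> y \<le> c21 \<longrightarrow> x + y = y + x)"
    unfolding dec_def com_def by blast
qed

end
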